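(* For each $n\geq 2$, there exist sets $D_n\subseteq\mathbb{Q}^n$ which are dense in $\mathbb{Q}^n$ (with respect to the product topology) and such that no two distinct points of $D_n$ are colinear.
   Context: Two points of $\mathbb{Q}^n$ are colinear if they share a common coordinate, i.e. $a_i=b_i$ for some $i\leq n$. *)

theory Defs
  imports "HOL-Analysis.Analysis"
begin

text \<open>Q^n is represented as the set of vectors in R^n all of whose coordinates are
rational; its product topology coincides with the subspace topology inherited from R^n.\<close>

definition rat_vecs :: "(real ^ 'n) set" where
  "rat_vecs = {x. \<forall>i. x $ i \<in> \<rat>}"

definition colinear :: "real ^ 'n \<Rightarrow> real ^ 'n \<Rightarrow> bool" where
  "colinear a b \<longleftrightarrow> (\<exists>i. a $ i = b $ i)"

end

theory Submission
  imports Defs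
begin

lemma rat_avoid:
  fixes a b :: real
  assumes "a < b" "finite F"
  shows "\<exists>t\<in>\<rat>. a < t \<and> t < b \<and> t \<notin> F"
proof -
  obtain s where s: "s \<in> \<rat>" "a < s" "s < b" using Rats_dense_in_real[OF assms(1)] by blast
  obtain d where d: "d \<in> \<rat>" "s < d" "d < b" using Rats_dense_in_real[OF s(3)] by blast
  define f where "f = (\<lambda>k::nat. s + (d - s) / (real k + 2))"
  have inj: "inj f"
  proof (rule injI)
    fix x y assume "f x = f y"
    then have "(d - s) / (real x + 2) = (d - s) / (real y + 2)" unfolding f_def by simp
    then have "real x + 2 = real y + 2" using d(2) by (simp add: divide_cancel_left)
    then show "x = y" by simp
  qed
  have inf: "infinite (range f)" using inj by (simp add: finite_image_iff)
  then obtain k where k: "f k \<notin> F"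
    using assms(2) by (metis finite_subset image_subset_iff subsetI)
  have pos: "(d - s) / (real k + 2) > 0" using d by auto
  moreover have "(d - s) / (real k + 2) < d - s"
  proof -
    have "s * real k \<le> d * real k" using d(2) by (simp add: mult_right_mono)
    then show ?thesis using d by (auto simp: field_simps)
  qed
  moreover have "f k \<in> \<rat>" unfolding f_def using s d by (intro Rats_add Rats_divide Rats_diff) auto
  moreover have "f k = s + (d - s) / (real k + 2)" unfolding f_def by simp
  ultimately show ?thesis using k s d pos by (intro bexI[of _ "f k"]) auto
qed

lemma pick_exists:
  fixes c :: "real ^ 'n"
  assumes "r > 0" "finite S"
  shows "\<exists>y. y \<in> rat_vecs \<and> dist y c < r \<and> (\<forall>z\<in>S. \<forall>l l'. y $ l \<noteq> z $ l')"
proof -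
  define F where "F = (\<lambda>(z, l). z $ l) ` (S \<times> UNIV)"
  have fF: "finite F" unfolding F_def using assms(2) by auto
  define e where "e = r / real CARD('n)"
  have e: "e > 0" unfolding e_def using assms(1) by auto
  have "\<forall>i. \<exists>t\<in>\<rat>. c $ i - e < t \<and> t < c $ i + e \<and> t \<notin> F"
    using rat_avoid[OF _ fF] e by auto
  then obtain t where t: "\<And>i. t i \<in> \<rat> \<and> c $ i - e < t i \<and> t i < c $ i + e \<and> t i \<notin> F"
    by metis
  define y where "y = (\<chi> i. t i)"
  have "y \<in> rat_vecs" unfolding y_def rat_vecs_def using t by auto
  moreover have "dist y c < r"
  proof -
    have "dist y c = norm (y - c)" by (simp add: dist_norm)
    also have "\<dots> \<le> (\<Sum>i\<in>UNIV. \<bar>(y - c) $ i\<bar>)" by (rule norm_le_l1_cart)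
    also have "\<dots> < (\<Sum>i\<in>(UNIV::'n set). e)"
    proof (rule sum_strict_mono)
      fix i :: 'n
      show "\<bar>(y - c) $ i\<bar> < e" using t[of i] by (simp add: y_def abs_less_iff)
    qed auto
    also have "\<dots> = r" unfolding e_def by simp
    finally show ?thesis .
  qed
  moreover have "\<forall>z\<in>S. \<forall>l l'. y $ l \<noteq> z $ l'"
  proof (intro ballI allI)
    fix z l l' assume "z \<in> S"
    then have "z $ l' \<in> F" unfolding F_def by force
    then show "y $ l \<noteq> z $ l'" using t[of l] unfolding y_def by auto
  qed
  ultimately show ?thesis by blast
qed

definition pick :: "real ^ 'n \<Rightarrow> real \<Rightarrow> (real ^ 'n) list \<Rightarrow> real ^ 'n" where
  "pick c r L = (SOME y. y \<in> rat_vecs \<and> dist y c < r \<and> (\<forall>z\<in>set L. \<forall>l l'. y $ l \<noteq> z $ l'))"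

definition ctr :: "nat \<Rightarrow> real ^ 'n" where
  "ctr j = from_nat_into rat_vecs (fst (prod_decode j))"

definition rad :: "nat \<Rightarrow> real" where
  "rad j = 1 / (real (snd (prod_decode j)) + 1)"

primrec sq :: "nat \<Rightarrow> (real ^ 'n) list" where
  "sq 0 = []"
| "sq (Suc j) = sq j @ [pick (ctr j) (rad j) (sq j)]"

definition pt :: "nat \<Rightarrow> real ^ 'n" where
  "pt j = pick (ctr j) (rad j) (sq j)"

lemma len_sq: "length (sq j) = j"
  by (induction j) auto

lemma sq_nth: "i < j \<Longrightarrow> sq j ! i = pt i"
proof (induction j)
  case 0 then show ?case by simp
next
  case (Suc j)
  then show ?case
    by (cases "i < j") (auto simp: nth_append len_sq pt_def less_Suc_eq)
qed

lemma set_sq: "set (sq j) = pt ` {..<j}"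
  by (auto simp: in_set_conv_nth len_sq sq_nth) (metis len_sq sq_nth)

lemma pt_prop: "(pt j :: real ^ 'n) \<in> rat_vecs \<and> dist (pt j :: real ^ 'n) (ctr j) < rad j \<and> (\<forall>z\<in>set (sq j :: (real ^ 'n) list). \<forall>l l'. (pt j :: real ^ 'n) $ l \<noteq> z $ l')"
proof -
  have "rad j > 0" unfolding rad_def by auto
  from pick_exists[OF this, of "set (sq j)" "ctr j"] obtain y :: "real ^ 'n" where
    "y \<in> rat_vecs \<and> dist y (ctr j) < rad j \<and> (\<forall>z\<in>set (sq j :: (real ^ 'n) list). \<forall>l l'. y $ l \<noteq> z $ l')" by auto
  then show ?thesis unfolding pt_def pick_def by (rule someI)
qed

theorem proposition1p4:
  assumes "CARD('n) \<ge> 2"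
  shows "\<exists>D :: (real ^ 'n) set. D \<subseteq> rat_vecs \<and> rat_vecs \<subseteq> closure D \<and>
           (\<forall>a\<in>D. \<forall>b\<in>D. a \<noteq> b \<longrightarrow> \<not> colinear a b)"
proof (intro exI[of _ "range (pt :: nat \<Rightarrow> real ^ 'n)"] conjI)
  show "range (pt :: nat \<Rightarrow> real ^ 'n) \<subseteq> rat_vecs" using pt_prop by auto
  show "rat_vecs \<subseteq> closure (range (pt :: nat \<Rightarrow> real ^ 'n))"
  proof
    fix x :: "real ^ 'n" assume x: "x \<in> rat_vecs"
    have ne: "rat_vecs \<noteq> ({} :: (real ^ 'n) set)" using x by auto
    have cnt: "countable (rat_vecs :: (real ^ 'n) set)"
    proof -
      have "rat_vecs \<subseteq> (\<lambda>f. \<chi> i. f i) ` (PiE UNIV (\<lambda>_. \<rat>))"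
        unfolding rat_vecs_def by (auto intro!: image_eqI[of _ _ "\<lambda>i. _ $ i"])
      moreover have "countable (PiE (UNIV :: 'n set) (\<lambda>_. \<rat>))"
        by (intro countable_PiE) (auto simp: countable_rat)
      ultimately show ?thesis by (meson countable_image countable_subset)
    qed
    obtain k where k: "from_nat_into rat_vecs k = x"
      using from_nat_into_surj[OF cnt x] by metis
    have "\<forall>e>0. \<exists>y\<in>range (pt :: nat \<Rightarrow> real ^ 'n). dist y x < e"
    proof (intro allI impI)
      fix e :: real assume e: "e > 0"
      obtain m :: nat where m: "1 / (real m + 1) < e"
        using e by (metis nat_approx_posE of_nat_Suc add.commute)
      define j where "j = prod_encode (k, m)"
      have c: "ctr j = x" and r: "rad j = 1 / (real m + 1)"
        unfolding ctr_def rad_def j_def using k by auto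
      have "dist (pt j :: real ^ 'n) (ctr j) < rad j" using pt_prop[of j] by blast
      then have "dist (pt j) x < e" using c r m by simp
      then show "\<exists>y\<in>range (pt :: nat \<Rightarrow> real ^ 'n). dist y x < e" by auto
    qed
    then show "x \<in> closure (range (pt :: nat \<Rightarrow> real ^ 'n))" by (simp add: closure_approachable)
  qed
  show "\<forall>a\<in>range (pt :: nat \<Rightarrow> real ^ 'n). \<forall>b\<in>range (pt :: nat \<Rightarrow> real ^ 'n). a \<noteq> b \<longrightarrow> \<not> colinear a b"
  proof (intro ballI impI)
    fix a b assume "a \<in> range (pt :: nat \<Rightarrow> real ^ 'n)" "b \<in> range (pt :: nat \<Rightarrow> real ^ 'n)" "a \<noteq> b"
    then obtain i j where ij: "a = pt i" "b = pt j" "i \<noteq> j" by auto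
    have key: "\<And>i j l. i < j \<Longrightarrow> pt j $ l \<noteq> pt i $ l"
      using pt_prop set_sq by blast
    show "\<not> colinear a b" unfolding colinear_def ij
      using key ij(3) by (metis linorder_neqE_nat)
  qed
qed

end
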